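(* Let $(G,S)$ be an orientable ribbon graph, let $\Sigma$ be the closed surface obtained from $S$ by attaching a disk along each boundary component, and let $g$ be the genus of $\Sigma$. Then $$BR_{G,S}(X,Y,Z)=Y^{g}\,P_{G,\Sigma}(X-1,\,Y,\,YZ^2,\,Y^{-1}).$$
   Context: An orientable ribbon graph $(G,S)$ is a graph $G$ embedded in a compact orientable surface with boundary $S$ such that the inclusion is a homotopy equivalence; $S$ is viewed as a union of disks (neighborhoods of vertices) and bands (neighborhoods of edges). A spanning subgraph $H\subset G$ inherits a ribbon structure: its surface is the union of all vertex disks and the bands of the edges of $H$. The Bollobás–Riordan polynomial is $$BR_{G,S}(X,Y,Z)=\sum_{H\subset G}(X-1)^{r(G)-r(H)}\,Y^{n(H)}\,Z^{c(H)-bc(H)+n(H)},$$ where $c(H)$ is the number of components of $H$, $r(H)=v(G)-c(H)$, $n(H)=e(H)-r(H)$ (with $v,e$ numbers of vertices and edges), and $bc(H)$ is the number of boundary components of the surface of the ribbon subgraph $H$. For a graph $G$ in a closed orientable surface $\Sigma$ and a spanning subgraph $H$: $k(H)=\dim\ker\big(H_1(H;\mathbb R)\to H_1(\Sigma;\mathbb R)\big)$; $s(H)$ is twice the genus of a regular neighborhood $\mathcal H$ of $H$ in $\Sigma$ (genus of a surface with boundary meaning the genus after capping boundary circles with disks); $s^{\perp}(H)$ is twice the genus of $\Sigma\smallsetminus\mathcal H$; and $$P_{G,\Sigma}(X,Y,A,B)=\sum_{H\subset G} X^{c(H)-c(G)}\,Y^{k(H)}\,A^{s(H)/2}\,B^{s^{\perp}(H)/2}.$$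 *)

theory Defs
  imports "HOL-Analysis.Analysis"
begin

text \<open>Combinatorial model of an orientable ribbon graph (rotation system).
  Darts (half-edges) form the finite type 'd; V is the finite vertex set,
  vert d is the vertex at which dart d is attached, sigma is the cyclic
  rotation of darts around each vertex (induced by the orientation of S),
  and alpha is the fixed-point-free involution pairing the two darts of an
  edge.  Vertices with no darts are isolated vertices.\<close>

definition ribbon_graph ::
  "'v set \<Rightarrow> ('d::finite \<Rightarrow> 'v) \<Rightarrow> ('d \<Rightarrow> 'd) \<Rightarrow> ('d \<Rightarrow> 'd) \<Rightarrow> bool" where
  "ribbon_graph V vert \<sigma> \<alpha> \<longleftrightarrow>
     finite V \<and> (\<forall>d. vert d \<in> V) \<and> bij \<sigma> \<and>
     (\<forall>d. vert (\<sigma> d) = vert d) \<and>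
     (\<forall>d d'. vert d = vert d' \<longrightarrow> (\<exists>n. (\<sigma> ^^ n) d = d')) \<and>
     (\<forall>d. \<alpha> (\<alpha> d) = d \<and> \<alpha> d \<noteq> d)"

text \<open>Edges of G: the alpha-orbits. A spanning subgraph is a set of edges.\<close>
definition edges :: "('d \<Rightarrow> 'd) \<Rightarrow> 'd set set" where
  "edges \<alpha> = {{d, \<alpha> d} | d. True}"

definition orbit :: "('a \<Rightarrow> 'a) \<Rightarrow> 'a \<Rightarrow> 'a set" where
  "orbit f d = {(f ^^ k) d | k. True}"

definition ncomp :: "'v set \<Rightarrow> ('d \<Rightarrow> 'v) \<Rightarrow> ('d \<Rightarrow> 'd) \<Rightarrow> 'd set set \<Rightarrow> nat" where
  "ncomp V vert \<alpha> H =
     card {({(vert d, vert (\<alpha> d)) | d. d \<in> \<Union>H}\<^sup>*) `` {v} | v. v \<in> V}"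

text \<open>Rotation induced on the darts of H (ribbon subgraph structure).\<close>
definition induced_rot :: "('d \<Rightarrow> 'd) \<Rightarrow> 'd set \<Rightarrow> 'd \<Rightarrow> 'd" where
  "induced_rot \<sigma> D d = (\<sigma> ^^ (LEAST k. 0 < k \<and> (\<sigma> ^^ k) d \<in> D)) d"

text \<open>Number of boundary components of the surface of the ribbon subgraph H:
  the orbits of the face permutation (induced rotation composed with alpha)
  on the darts of H, plus one boundary circle for each vertex of V carrying
  no dart of H.\<close>
definition bc :: "'v set \<Rightarrow> ('d \<Rightarrow> 'v) \<Rightarrow> ('d \<Rightarrow> 'd) \<Rightarrow> ('d \<Rightarrow> 'd) \<Rightarrow> 'd set set \<Rightarrow> nat" where
  "bc V vert \<sigma> \<alpha> H =
     card {orbit (induced_rot \<sigma> (\<Union>H) \<circ> \<alpha>) d | d. d \<in> \<Union>H}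
     + card {v \<in> V. \<forall>d. vert d = v \<longrightarrow> d \<notin> \<Union>H}"

definition BR :: "'v set \<Rightarrow> ('d::finite \<Rightarrow> 'v) \<Rightarrow> ('d \<Rightarrow> 'd) \<Rightarrow> ('d \<Rightarrow> 'd)
                   \<Rightarrow> real \<Rightarrow> real \<Rightarrow> real \<Rightarrow> real" where
  "BR V vert \<sigma> \<alpha> X Y Z =
     (let E = edges \<alpha>;
          r = (\<lambda>H. int (card V) - int (ncomp V vert \<alpha> H));
          n = (\<lambda>H. int (card H) - r H)
      in \<Sum>H\<in>Pow E. (X - 1) powi (r E - r H) * Y powi (n H)
                    * Z powi (int (ncomp V vert \<alpha> H) - int (bc V vert \<sigma> \<alpha> H) + n H))"

text \<open>Faces of G (2-cells of the closed surface Sigma obtained by capping):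
  as dart sets, the orbits of sigma o alpha.  Together with one capping disk
  for each isolated vertex, their number is bc(G).\<close>
definition faces :: "('d \<Rightarrow> 'd) \<Rightarrow> ('d \<Rightarrow> 'd) \<Rightarrow> 'd set set" where
  "faces \<sigma> \<alpha> = {orbit (\<sigma> \<circ> \<alpha>) d | d. True}"

text \<open>Genus of Sigma (sum of the genera of its components), via Euler characteristic
  v - e + f = 2 c - 2 g of the cellular decomposition of Sigma.\<close>
definition genus_closed :: "'v set \<Rightarrow> ('d::finite \<Rightarrow> 'v) \<Rightarrow> ('d \<Rightarrow> 'd) \<Rightarrow> ('d \<Rightarrow> 'd) \<Rightarrow> int" where
  "genus_closed V vert \<sigma> \<alpha> =
     (2 * int (ncomp V vert \<alpha> (edges \<alpha>)) - int (card V) + int (card (edges \<alpha>))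
      - int (bc V vert \<sigma> \<alpha> (edges \<alpha>))) div 2"

text \<open>s(H): twice the genus of the regular neighbourhood of H in Sigma
  (= the surface of the ribbon subgraph H), via its Euler characteristic.\<close>
definition s_nbhd :: "'v set \<Rightarrow> ('d::finite \<Rightarrow> 'v) \<Rightarrow> ('d \<Rightarrow> 'd) \<Rightarrow> ('d \<Rightarrow> 'd) \<Rightarrow> 'd set set \<Rightarrow> int" where
  "s_nbhd V vert \<sigma> \<alpha> H =
     2 * int (ncomp V vert \<alpha> H) - int (card V) + int (card H) - int (bc V vert \<sigma> \<alpha> H)"

text \<open>The complement of the neighbourhood of H in Sigma consists of the 2-cells of
  Sigma (the faces of G and the caps of the isolated vertices) joined by the bands
  of the edges not in H; its boundary is the boundary of the neighbourhood.
  Components: classes of 2-cells under adjacency across edges not in H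
  (isolated-vertex caps are singleton classes).\<close>
definition ncomp_compl :: "'v set \<Rightarrow> ('d::finite \<Rightarrow> 'v) \<Rightarrow> ('d \<Rightarrow> 'd) \<Rightarrow> ('d \<Rightarrow> 'd) \<Rightarrow> 'd set set \<Rightarrow> nat" where
  "ncomp_compl V vert \<sigma> \<alpha> H =
     card {({(f1, f2) | f1 f2 d. f1 \<in> faces \<sigma> \<alpha> \<and> f2 \<in> faces \<sigma> \<alpha> \<and>
                               d \<notin> \<Union>H \<and> d \<in> f1 \<and> \<alpha> d \<in> f2}\<^sup>*) `` {f} | f. f \<in> faces \<sigma> \<alpha>}
     + card {v \<in> V. \<forall>d. vert d \<noteq> v}"

text \<open>s-perp(H): twice the genus of the complement, via Euler characteristic
  (2-cells minus bands of edges not in H).\<close>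
definition s_perp :: "'v set \<Rightarrow> ('d::finite \<Rightarrow> 'v) \<Rightarrow> ('d \<Rightarrow> 'd) \<Rightarrow> ('d \<Rightarrow> 'd) \<Rightarrow> 'd set set \<Rightarrow> int" where
  "s_perp V vert \<sigma> \<alpha> H =
     2 * int (ncomp_compl V vert \<sigma> \<alpha> H) - int (bc V vert \<sigma> \<alpha> (edges \<alpha>))
     + int (card (edges \<alpha> - H)) - int (bc V vert \<sigma> \<alpha> H)"

text \<open>Real cellular 1-chains: antisymmetric functions on darts (x (alpha d) = - x d).
  Cycles of H: chains supported on the darts of H with zero boundary at every vertex.
  Boundaries in Sigma: span of the boundary chains of the 2-cells (faces).
  k(H) = dim ker (H_1(H;R) -> H_1(Sigma;R)) = dim (Z_1(H) inter B_1(Sigma)).\<close>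
definition cycles :: "('d::finite \<Rightarrow> 'v) \<Rightarrow> ('d \<Rightarrow> 'd) \<Rightarrow> 'd set set \<Rightarrow> (real ^ 'd) set" where
  "cycles vert \<alpha> H =
     {x. (\<forall>d. x $ (\<alpha> d) = - (x $ d)) \<and> (\<forall>d. d \<notin> \<Union>H \<longrightarrow> x $ d = 0) \<and>
         (\<forall>v. (\<Sum>d\<in>{d. vert d = v}. x $ d) = 0)}"

definition face_chain :: "('d::finite \<Rightarrow> 'd) \<Rightarrow> 'd set \<Rightarrow> real ^ 'd" where
  "face_chain \<alpha> f = (\<chi> d. (if d \<in> f then 1 else 0) - (if \<alpha> d \<in> f then 1 else 0))"

definition k_ker :: "('d::finite \<Rightarrow> 'v) \<Rightarrow> ('d \<Rightarrow> 'd) \<Rightarrow> ('d \<Rightarrow> 'd) \<Rightarrow> 'd set set \<Rightarrow> nat" where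
  "k_ker vert \<sigma> \<alpha> H = dim (cycles vert \<alpha> H \<inter> span (face_chain \<alpha> ` faces \<sigma> \<alpha>))"

definition P_poly :: "'v set \<Rightarrow> ('d::finite \<Rightarrow> 'v) \<Rightarrow> ('d \<Rightarrow> 'd) \<Rightarrow> ('d \<Rightarrow> 'd)
                   \<Rightarrow> real \<Rightarrow> real \<Rightarrow> real \<Rightarrow> real \<Rightarrow> real" where
  "P_poly V vert \<sigma> \<alpha> X Y A B =
     (\<Sum>H\<in>Pow (edges \<alpha>).
        X powi (int (ncomp V vert \<alpha> H) - int (ncomp V vert \<alpha> (edges \<alpha>)))
        * Y powi int (k_ker vert \<sigma> \<alpha> H)
        * A powi (s_nbhd V vert \<sigma> \<alpha> H div 2)
        * B powi (s_perp V vert \<sigma> \<alpha> H div 2))"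

end

theory Submission
  imports Defs "HOL-Combinatorics.Cycles"
begin

section \<open>Orbits and signs\<close>

lemma orbit_self: "x \<in> orbit p x"
  unfolding orbit_def by (auto intro: exI[of _ 0])

lemma orbit_funpow: "(p ^^ k) x \<in> orbit p x"
  unfolding orbit_def by auto

lemma orbit_step: "y \<in> orbit p x \<Longrightarrow> p y \<in> orbit p x"
proof -
  assume "y \<in> orbit p x"
  then obtain k where "y = (p ^^ k) x" unfolding orbit_def by auto
  then have "p y = (p ^^ Suc k) x" by simp
  then show ?thesis unfolding orbit_def by blast
qed

lemma orbit_minimal:
  assumes "x \<in> S" and "\<And>y. y \<in> S \<Longrightarrow> p y \<in> S"
  shows "orbit p x \<subseteq> S"
proof
  fix y assume "y \<in> orbit p x"
  then obtain k where "y = (p ^^ k) x" unfolding orbit_def by auto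
  moreover have "(p ^^ k) x \<in> S" for k by (induction k) (use assms in auto)
  ultimately show "y \<in> S" by simp
qed

lemma orbit_sub: "y \<in> orbit p x \<Longrightarrow> orbit p y \<subseteq> orbit p x"
  by (rule orbit_minimal) (auto intro: orbit_step)

lemma perm_fin: "permutation (p :: 'a::finite \<Rightarrow> 'a) \<longleftrightarrow> bij p"
  by (simp add: permutation)

lemma orbit_sym:
  assumes "permutation p" and "y \<in> orbit p x"
  shows "x \<in> orbit p y"
proof -
  obtain n where n: "(p ^^ n) = id" "n > 0" using permutation_is_nilpotent[OF assms(1)] by blast
  obtain k where k: "y = (p ^^ k) x" using assms(2) unfolding orbit_def by auto
  have "(p ^^ (n * k)) = (p ^^ n) ^^ k" by (simp add: funpow_mult)
  then have "(p ^^ (n * k)) = id" using n(1) by simp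
  have "k \<le> n * k" using n(2) by simp
  then have "(p ^^ (n * k - k)) y = (p ^^ (n * k)) x"
  proof -
    have "(p ^^ (n * k - k)) ((p ^^ k) x) = (p ^^ (n * k - k + k)) x" by (simp add: funpow_add)
    then show ?thesis using \<open>k \<le> n * k\<close> k by simp
  qed
  also have "\<dots> = x" using \<open>(p ^^ (n * k)) = id\<close> by simp
  finally have "(p ^^ (n * k - k)) y = x" .
  then show ?thesis using orbit_funpow[where p=p and k="n * k - k" and x=y] by simp
qed

lemma orbit_eq:
  assumes "permutation p" and "y \<in> orbit p x"
  shows "orbit p y = orbit p x"
  by (rule equalityI[OF orbit_sub[OF assms(2)] orbit_sub[OF orbit_sym[OF assms]]])

lemma splice:
  fixes p :: "'a::finite \<Rightarrow> 'a"
  assumes pp: "permutation p" and pa: "p a \<noteq> a"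
  defines "q \<equiv> Transposition.transpose a (p a) \<circ> p"
  shows "permutation q" "card {x. q x \<noteq> x} < card {x. p x \<noteq> x}"
    "card (range (orbit q)) = card (range (orbit p)) + 1" "sign q = - sign p"
proof -
  have bp: "bij p" using pp perm_fin by blast
  then have ip: "inj p" by (simp add: bij_is_inj)
  show qp: "permutation q" unfolding q_def by (intro permutation_compose permutation_swap_id pp)
  show "sign q = - sign p" unfolding q_def
    using sign_compose[OF permutation_swap_id pp, of a "p a"] pa by (simp add: sign_swap_id)
  have qa: "q a = a" unfolding q_def by simp
  have qo: "q x = p x" if "x \<noteq> a" "p x \<noteq> a" for x
  proof -
    have "p x \<noteq> p a" using that ip by (meson injD)
    then show ?thesis unfolding q_def using that by (simp add: transpose_def)
  qed
  have qpre: "q x = p a" if "p x = a" for x unfolding q_def using that by simp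
  have "{x. q x \<noteq> x} \<subseteq> {x. p x \<noteq> x} - {a}"
  proof
    fix x assume "x \<in> {x. q x \<noteq> x}"
    then have "q x \<noteq> x" by simp
    moreover have "x \<noteq> a" using qa calculation by auto
    moreover have "p x \<noteq> x"
    proof
      assume "p x = x"
      then have "q x = p x" using qo \<open>x \<noteq> a\<close> by simp
      then show False using \<open>p x = x\<close> \<open>q x \<noteq> x\<close> by simp
    qed
    ultimately show "x \<in> {x. p x \<noteq> x} - {a}" by simp
  qed
  also have "\<dots> \<subset> {x. p x \<noteq> x}" using pa by auto
  finally show "card {x. q x \<noteq> x} < card {x. p x \<noteq> x}" by (simp add: psubset_card_mono)
  define Ob where "Ob = orbit p a"
  have aO: "a \<in> Ob" unfolding Ob_def by (rule orbit_self)
  have paO: "p a \<in> Ob - {a}" using pa orbit_step[OF aO[unfolded Ob_def]] Ob_def by simp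
  have oeq: "orbit p y = Ob" if "y \<in> Ob" for y using orbit_eq[OF pp, of y a] that Ob_def by simp
  have c1: "orbit q x = orbit p x" if "x \<notin> Ob" for x
  proof -
    have nO: "y \<notin> Ob" if "y \<in> orbit p x" for y
    proof
      assume "y \<in> Ob"
      then have "orbit p y = Ob" using oeq by simp
      moreover have "orbit p y = orbit p x" using orbit_eq[OF pp that] .
      ultimately show False using \<open>x \<notin> Ob\<close> orbit_self[of x p] by simp
    qed
    have "(q ^^ k) x = (p ^^ k) x" for k
    proof (induction k)
      case (Suc k)
      have y: "(p ^^ k) x \<in> orbit p x" by (rule orbit_funpow)
      then have "(p ^^ k) x \<noteq> a" using nO[OF y] aO by auto
      moreover have "p ((p ^^ k) x) \<noteq> a" using nO[OF orbit_step[OF y]] aO by auto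
      ultimately show ?case using Suc qo by simp
    qed simp
    then show ?thesis unfolding orbit_def by simp
  qed
  have c2: "orbit q a = {a}"
  proof -
    have "(q ^^ k) a = a" for k by (induction k) (simp_all add: qa)
    then show ?thesis unfolding orbit_def by auto
  qed
  have c3: "orbit q (p a) = Ob - {a}"
  proof
    show "orbit q (p a) \<subseteq> Ob - {a}"
    proof (rule orbit_minimal)
      show "p a \<in> Ob - {a}" by (rule paO)
      fix y assume y: "y \<in> Ob - {a}"
      show "q y \<in> Ob - {a}"
      proof (cases "p y = a")
        case True then show ?thesis using qpre \<open>p a \<in> Ob - {a}\<close> by simp
      next
        case False then show ?thesis using qo y orbit_step Ob_def by auto
      qed
    qed
    have "(p ^^ j) a = a \<or> (p ^^ j) a \<in> orbit q (p a)" for j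
    proof (induction j)
      case 0 then show ?case by simp
    next
      case (Suc j)
      show ?case
      proof (cases "(p ^^ j) a = a")
        case True then show ?thesis using orbit_self[of "p a" q] by simp
      next
        case False
        with Suc have y: "(p ^^ j) a \<in> orbit q (p a)" by simp
        show ?thesis
        proof (cases "p ((p ^^ j) a) = a")
          case True then show ?thesis by simp
        next
          case F2: False
          then have "q ((p ^^ j) a) = p ((p ^^ j) a)" using qo False by simp
          then show ?thesis using orbit_step[OF y] by simp
        qed
      qed
    qed
    then show "Ob - {a} \<subseteq> orbit q (p a)" unfolding Ob_def orbit_def by auto
  qed
  have c4: "orbit q x = Ob - {a}" if "x \<in> Ob - {a}" for x
    using orbit_eq[OF qp, of x "p a"] c3 that by simp
  have R: "range (orbit q) = (range (orbit p) - {Ob}) \<union> {{a}, Ob - {a}}"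
  proof
    show "range (orbit q) \<subseteq> (range (orbit p) - {Ob}) \<union> {{a}, Ob - {a}}"
    proof
      fix S assume "S \<in> range (orbit q)"
      then obtain x where x: "S = orbit q x" by auto
      show "S \<in> (range (orbit p) - {Ob}) \<union> {{a}, Ob - {a}}"
      proof (cases "x \<in> Ob")
        case True
        then show ?thesis using c2 c4 x by (cases "x = a") auto
      next
        case False
        then have "orbit p x \<noteq> Ob" using orbit_self[of x p] by auto
        then show ?thesis using c1[OF False] x by auto
      qed
    qed
    show "(range (orbit p) - {Ob}) \<union> {{a}, Ob - {a}} \<subseteq> range (orbit q)"
    proof
      fix S assume S: "S \<in> (range (orbit p) - {Ob}) \<union> {{a}, Ob - {a}}"
      show "S \<in> range (orbit q)"
      proof (cases "S \<in> {{a}, Ob - {a}}")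
        case True
        then have "S = orbit q a \<or> S = orbit q (p a)" using c2 c3 by auto
        then show ?thesis by auto
      next
        case False
        then obtain x where x: "S = orbit p x" "orbit p x \<noteq> Ob" using S by auto
        have "x \<notin> Ob" using x(2) oeq by auto
        then show ?thesis using c1[of x] x(1) by auto
      qed
    qed
  qed
  have n1: "{a} \<notin> range (orbit p) - {Ob}"
  proof
    assume "{a} \<in> range (orbit p) - {Ob}"
    then obtain y where "{a} = orbit p y" "orbit p y \<noteq> Ob" by auto
    then have "a \<in> orbit p y" by (metis singletonI)
    then have "orbit p a = orbit p y" by (rule orbit_eq[OF pp])
    then show False using \<open>orbit p y \<noteq> Ob\<close> Ob_def by simp
  qed
  have n2: "Ob - {a} \<notin> range (orbit p) - {Ob}"
  proof
    assume "Ob - {a} \<in> range (orbit p) - {Ob}"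
    then obtain y where "Ob - {a} = orbit p y" "orbit p y \<noteq> Ob" by auto
    then have "p a \<in> orbit p y" using paO by (metis)
    then have "orbit p (p a) = orbit p y" by (rule orbit_eq[OF pp])
    moreover have "orbit p (p a) = Ob" using oeq paO by simp
    ultimately show False using \<open>orbit p y \<noteq> Ob\<close> by simp
  qed
  have n3: "{a} \<noteq> Ob - {a}" by auto
  have OR: "Ob \<in> range (orbit p)" unfolding Ob_def by (rule rangeI)
  have "card (range (orbit q)) = card (range (orbit p) - {Ob}) + 2"
    unfolding R using n1 n2 n3 by (simp add: card_insert_if)
  also have "card (range (orbit p) - {Ob}) + 1 = card (range (orbit p))"
  proof -
    have "card (range (orbit p)) > 0" using OR by (auto simp: card_gt_0_iff)
    then show ?thesis using OR by (simp add: card_Diff_singleton)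
  qed
  ultimately show "card (range (orbit q)) = card (range (orbit p)) + 1" by simp
qed

lemma sign_orbits:
  fixes p :: "'a::finite \<Rightarrow> 'a"
  assumes "permutation p"
  shows "sign p = (-1) ^ (CARD('a) + card (range (orbit p)))"
  using assms
proof (induction "card {x. p x \<noteq> x}" arbitrary: p rule: less_induct)
  case less
  show ?case
  proof (cases "\<exists>a. p a \<noteq> a")
    case False
    then have "p = id" by auto
    then have "range (orbit p) = (\<lambda>x. {x}) ` UNIV"
      unfolding orbit_def by auto
    then have "card (range (orbit p)) = CARD('a)" by (simp add: card_image)
    then show ?thesis using \<open>p = id\<close> by (simp flip: mult_2)
  next
    case True
    then obtain a where pa: "p a \<noteq> a" by blast
    note s = splice[OF less.prems pa]
    have "sign (Transposition.transpose a (p a) \<circ> p) = (-1) ^ (CARD('a) + card (range (orbit (Transposition.transpose a (p a) \<circ> p))))"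
      using less.hyps[OF s(2) s(1)] .
    then show ?thesis using s(3,4) by simp
  qed
qed

lemma card_eq_kernel:
  assumes "\<And>x y. x \<in> A \<Longrightarrow> y \<in> A \<Longrightarrow> f x = f y \<longleftrightarrow> h x = h y"
  shows "card (f ` A) = card (h ` A)"
proof -
  define F where "F z = h (inv_into A f z)" for z
  have "bij_betw F (f ` A) (h ` A)"
  proof (rule bij_betw_imageI)
    show "inj_on F (f ` A)"
    proof (rule inj_onI)
      fix z1 z2 assume z: "z1 \<in> f ` A" "z2 \<in> f ` A" "F z1 = F z2"
      have "inv_into A f z1 \<in> A" "inv_into A f z2 \<in> A" using z by (auto intro: inv_into_into)
      then have "f (inv_into A f z1) = f (inv_into A f z2)" using assms z(3) unfolding F_def by blast
      then show "z1 = z2" using z(1,2) by (simp add: f_inv_into_f)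
    qed
    show "F ` f ` A = h ` A"
    proof
      show "F ` f ` A \<subseteq> h ` A" unfolding F_def by (auto intro: inv_into_into)
      show "h ` A \<subseteq> F ` f ` A"
      proof
        fix z assume "z \<in> h ` A"
        then obtain x where x: "x \<in> A" "z = h x" by auto
        have i: "inv_into A f (f x) \<in> A" using x by (auto intro: inv_into_into)
        have "f (inv_into A f (f x)) = f x" using x by (simp add: f_inv_into_f)
        then have "F (f x) = h x" unfolding F_def using assms[OF i x(1)] by simp
        then show "z \<in> F ` f ` A" using x by (metis imageI)
      qed
    qed
  qed
  then show ?thesis by (rule bij_betw_same_card)
qed

lemma orbit_count:
  fixes p :: "'a::finite \<Rightarrow> 'a"
  assumes out: "\<And>x. x \<notin> U \<Longrightarrow> p x = x" and inn: "\<And>x. x \<in> U \<Longrightarrow> p x \<in> U"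
  shows "card (range (orbit p)) = card (orbit p ` U) + card (- U)"
proof -
  have o1: "orbit p x = {x}" if "x \<notin> U" for x
  proof -
    have "(p ^^ k) x = x" for k by (induction k) (simp_all add: out that)
    then show ?thesis unfolding orbit_def by auto
  qed
  have o2: "orbit p x \<subseteq> U" if "x \<in> U" for x using orbit_minimal[of x U p] that inn by blast
  have R: "range (orbit p) = orbit p ` U \<union> (\<lambda>x. {x}) ` (- U)"
  proof
    show "range (orbit p) \<subseteq> orbit p ` U \<union> (\<lambda>x. {x}) ` (- U)"
      using o1 by (auto simp: image_iff) (metis ComplI o1)
    show "orbit p ` U \<union> (\<lambda>x. {x}) ` (- U) \<subseteq> range (orbit p)"
      using o1 by auto
  qed
  have D: "orbit p ` U \<inter> (\<lambda>x. {x}) ` (- U) = {}"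
  proof (rule ccontr)
    assume "orbit p ` U \<inter> (\<lambda>x. {x}) ` (- U) \<noteq> {}"
    then obtain x y where xy: "x \<in> U" "y \<notin> U" "orbit p x = {y}" by auto
    then show False using orbit_self[of x p] by simp
  qed
  have "card (range (orbit p)) = card (orbit p ` U) + card ((\<lambda>x. {x}) ` (- U))"
    unfolding R by (rule card_Un_disjoint) (use D in auto)
  also have "card ((\<lambda>x. {x}) ` (- U)) = card (- U)" by (rule card_image) (auto simp: inj_on_def)
  finally show ?thesis .
qed

locale rgl =
  fixes V :: "'v set" and vert :: "'d::finite \<Rightarrow> 'v" and \<sigma> \<alpha> :: "'d \<Rightarrow> 'd"
  assumes rg: "ribbon_graph V vert \<sigma> \<alpha>"
begin

lemma finV: "finite V" and vertV: "vert d \<in> V" and bs: "bij \<sigma>" and vs: "vert (\<sigma> d) = vert d"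
  and trans: "vert d = vert d' \<Longrightarrow> \<exists>n. (\<sigma> ^^ n) d = d'"
  and aa: "\<alpha> (\<alpha> d) = d" and an: "\<alpha> d \<noteq> d"
  using rg unfolding ribbon_graph_def by auto

lemma a_inj: "(\<alpha> x = \<alpha> y) = (x = y)" by (metis aa)

lemma ps: "permutation \<sigma>" using bs perm_fin by blast

lemma vsn: "vert ((\<sigma> ^^ k) d) = vert d"
  by (induction k) (simp_all add: vs)

lemma Ualpha:
  assumes "H \<subseteq> edges \<alpha>" and "d \<in> \<Union>H" shows "\<alpha> d \<in> \<Union>H"
proof -
  obtain e where e: "{e, \<alpha> e} \<in> H" "d \<in> {e, \<alpha> e}" using assms unfolding edges_def by blast
  then show ?thesis using aa by auto
qed

context
  fixes U :: "'d set"
  assumes Ua: "\<And>d. d \<in> U \<Longrightarrow> \<alpha> d \<in> U"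
begin

definition K :: "'d \<Rightarrow> nat" where "K d = (LEAST k. 0 < k \<and> (\<sigma> ^^ k) d \<in> U)"

lemma K_ex: assumes "d \<in> U" shows "\<exists>k. 0 < k \<and> (\<sigma> ^^ k) d \<in> U"
proof -
  obtain n where "(\<sigma> ^^ n) = id" "n > 0" using permutation_is_nilpotent[OF ps] by blast
  then show ?thesis using assms by auto
qed

lemma K_prop: assumes "d \<in> U" shows "0 < K d" "(\<sigma> ^^ K d) d \<in> U"
  using LeastI_ex[OF K_ex[OF assms]] unfolding K_def by auto

lemma K_min: assumes "0 < k" "k < K d" shows "(\<sigma> ^^ k) d \<notin> U"
  using not_less_Least[of k "\<lambda>k. 0 < k \<and> (\<sigma> ^^ k) d \<in> U"] assms unfolding K_def by auto

lemma rho_eq: "induced_rot \<sigma> U d = (\<sigma> ^^ K d) d"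
  unfolding induced_rot_def K_def ..

lemma rho_U: "d \<in> U \<Longrightarrow> induced_rot \<sigma> U d \<in> U"
  using K_prop rho_eq by simp

lemma rho_vert: "vert (induced_rot \<sigma> U d) = vert d"
  using rho_eq vsn by simp

lemma rho_inj: "inj_on (induced_rot \<sigma> U) U"
proof -
  have key: "d = d'" if "d \<in> U" "d' \<in> U" "K d \<le> K d'" "(\<sigma> ^^ K d) d = (\<sigma> ^^ K d') d'" for d d'
  proof -
    have "(\<sigma> ^^ K d') d' = (\<sigma> ^^ (K d + (K d' - K d))) d'" using that(3) by simp
    also have "\<dots> = (\<sigma> ^^ K d) ((\<sigma> ^^ (K d' - K d)) d')" by (simp add: funpow_add)
    finally have "(\<sigma> ^^ K d') d' = (\<sigma> ^^ K d) ((\<sigma> ^^ (K d' - K d)) d')" .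
    then have "(\<sigma> ^^ K d) d = (\<sigma> ^^ K d) ((\<sigma> ^^ (K d' - K d)) d')" using that(4) by simp
    then have eq: "d = (\<sigma> ^^ (K d' - K d)) d'"
      using inj_fn[OF bij_is_inj[OF bs], of "K d"] by (simp add: inj_eq)
    show ?thesis
    proof (cases "K d' - K d = 0")
      case True then show ?thesis using eq by simp
    next
      case False
      then have "0 < K d' - K d" "K d' - K d < K d'" using K_prop(1)[OF that(1)] by auto
      then have "(\<sigma> ^^ (K d' - K d)) d' \<notin> U" by (rule K_min)
      then show ?thesis using eq that(1) by simp
    qed
  qed
  show ?thesis
  proof (rule inj_onI)
    fix d d' assume "d \<in> U" "d' \<in> U" "induced_rot \<sigma> U d = induced_rot \<sigma> U d'"
    then show "d = d'" using key[of d d'] key[of d' d] rho_eq by (cases "K d \<le> K d'") auto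
  qed
qed

lemma rho_reach:
  assumes "d \<in> U" "y \<in> U" "vert y = vert d"
  shows "\<exists>j. (induced_rot \<sigma> U ^^ j) d = y"
proof -
  have "\<forall>d. d \<in> U \<longrightarrow> (\<sigma> ^^ m) d \<in> U \<longrightarrow> (\<exists>j. (induced_rot \<sigma> U ^^ j) d = (\<sigma> ^^ m) d)" for m
  proof (induction m rule: less_induct)
    case (less m)
    show ?case
    proof (intro allI impI)
      fix d assume d: "d \<in> U" "(\<sigma> ^^ m) d \<in> U"
      show "\<exists>j. (induced_rot \<sigma> U ^^ j) d = (\<sigma> ^^ m) d"
      proof (cases "m = 0")
        case True then show ?thesis by (auto intro: exI[of _ 0])
      next
        case False
        have "\<not> m < K d" using K_min[of m d] False d(2) by auto
        then have le: "K d \<le> m" by simp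
        have r: "induced_rot \<sigma> U d \<in> U" using rho_U d(1) .
        have "(\<sigma> ^^ m) d = (\<sigma> ^^ ((m - K d) + K d)) d" using le by simp
        also have "\<dots> = (\<sigma> ^^ (m - K d)) ((\<sigma> ^^ K d) d)" by (simp add: funpow_add)
        finally have eq: "(\<sigma> ^^ m) d = (\<sigma> ^^ (m - K d)) (induced_rot \<sigma> U d)" using rho_eq by simp
        have "m - K d < m" using K_prop(1)[OF d(1)] False by simp
        moreover have "(\<sigma> ^^ (m - K d)) (induced_rot \<sigma> U d) \<in> U" using d(2) eq by simp
        ultimately obtain j where j: "(induced_rot \<sigma> U ^^ j) (induced_rot \<sigma> U d) = (\<sigma> ^^ (m - K d)) (induced_rot \<sigma> U d)"
          using less.IH r by blast
        have "(induced_rot \<sigma> U ^^ Suc j) d = (\<sigma> ^^ m) d"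
          using j eq by (simp add: funpow_Suc_right del: funpow.simps)
        then show ?thesis by blast
      qed
    qed
  qed
  moreover obtain m where m: "(\<sigma> ^^ m) d = y" using trans[of d y] assms(3) by auto
  ultimately show ?thesis using assms by auto
qed

definition rho' where "rho' x = (if x \<in> U then induced_rot \<sigma> U x else x)"
definition alpha' where "alpha' x = (if x \<in> U then \<alpha> x else x)"

lemma rho'_perm: "permutation rho'"
proof -
  have "inj rho'"
  proof (rule injI)
    fix x y assume "rho' x = rho' y"
    then show "x = y" unfolding rho'_def using rho_U rho_inj
      by (auto split: if_splits dest: inj_onD)
  qed
  then show ?thesis by (simp add: perm_fin bij_def finite_UNIV_inj_surj)
qed

lemma alpha'_perm: "permutation alpha'"
proof -
  have "inj alpha'"
  proof (rule injI)
    fix x y assume "alpha' x = alpha' y"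
    then show "x = y" unfolding alpha'_def using Ua aa by (auto split: if_splits simp: a_inj)
  qed
  then show ?thesis by (simp add: perm_fin bij_def finite_UNIV_inj_surj)
qed

lemma rho'_orbit: assumes "d \<in> U" shows "orbit rho' d = {y \<in> U. vert y = vert d}"
proof
  show "orbit rho' d \<subseteq> {y \<in> U. vert y = vert d}"
    by (rule orbit_minimal) (use assms rho_U rho_vert in \<open>auto simp: rho'_def\<close>)
  have it: "(rho' ^^ j) d = (induced_rot \<sigma> U ^^ j) d \<and> (induced_rot \<sigma> U ^^ j) d \<in> U" for j
    by (induction j) (simp_all add: assms rho'_def rho_U)
  show "{y \<in> U. vert y = vert d} \<subseteq> orbit rho' d"
  proof
    fix y assume "y \<in> {y \<in> U. vert y = vert d}"
    then obtain j where "(induced_rot \<sigma> U ^^ j) d = y" using rho_reach assms by auto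
    then show "y \<in> orbit rho' d" using it[of j] orbit_funpow[where p=rho' and k=j and x=d] by simp
  qed
qed

lemma alpha'_orbit: assumes "d \<in> U" shows "orbit alpha' d = {d, \<alpha> d}"
proof
  show "orbit alpha' d \<subseteq> {d, \<alpha> d}"
    by (rule orbit_minimal) (use assms Ua aa in \<open>auto simp: alpha'_def\<close>)
  have "\<alpha> d \<in> orbit alpha' d" using orbit_step[OF orbit_self[of d alpha']] assms by (simp add: alpha'_def)
  then show "{d, \<alpha> d} \<subseteq> orbit alpha' d" using orbit_self by auto
qed

lemma phi_orbit: assumes "d \<in> U" shows "orbit (rho' \<circ> alpha') d = orbit (induced_rot \<sigma> U \<circ> \<alpha>) d"
proof -
  have "((rho' \<circ> alpha') ^^ j) d = ((induced_rot \<sigma> U \<circ> \<alpha>) ^^ j) d \<and> ((induced_rot \<sigma> U \<circ> \<alpha>) ^^ j) d \<in> U" for j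
    by (induction j) (simp_all add: assms rho'_def alpha'_def rho_U Ua)
  then show ?thesis unfolding orbit_def by simp
qed

lemma count_rho': "card (range (orbit rho')) = card (vert ` U) + card (- U)"
proof -
  have "card (range (orbit rho')) = card (orbit rho' ` U) + card (- U)"
    by (rule orbit_count) (auto simp: rho'_def rho_U)
  also have "card (orbit rho' ` U) = card (vert ` U)"
  proof (rule card_eq_kernel)
    fix x y assume "x \<in> U" "y \<in> U"
    then show "orbit rho' x = orbit rho' y \<longleftrightarrow> vert x = vert y" using rho'_orbit by auto
  qed
  finally show ?thesis .
qed

lemma count_alpha': "card (range (orbit alpha')) = card (orbit alpha' ` U) + card (- U)"
  by (rule orbit_count) (auto simp: alpha'_def Ua)

lemma count_phi: "card (range (orbit (rho' \<circ> alpha'))) =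
   card ((\<lambda>d. orbit (induced_rot \<sigma> U \<circ> \<alpha>) d) ` U) + card (- U)"
proof -
  have "card (range (orbit (rho' \<circ> alpha'))) = card (orbit (rho' \<circ> alpha') ` U) + card (- U)"
    by (rule orbit_count) (auto simp: rho'_def alpha'_def rho_U Ua)
  also have "orbit (rho' \<circ> alpha') ` U = (\<lambda>d. orbit (induced_rot \<sigma> U \<circ> \<alpha>) d) ` U"
    using phi_orbit by auto
  finally show ?thesis .
qed

lemma parity_U:
  "(-1::int) ^ (card U + card ((\<lambda>d. orbit (induced_rot \<sigma> U \<circ> \<alpha>) d) ` U)) =
   (-1) ^ (card (vert ` U) + card (orbit alpha' ` U))"
proof -
  let ?N = "CARD('d)" and ?m = "card (- U)"
  have "sign (rho' \<circ> alpha') = sign rho' * sign alpha'"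
    by (rule sign_compose[OF rho'_perm alpha'_perm])
  then have "(-1::int) ^ (?N + (card ((\<lambda>d. orbit (induced_rot \<sigma> U \<circ> \<alpha>) d) ` U) + ?m)) =
      (-1) ^ (?N + (card (vert ` U) + ?m)) * (-1) ^ (?N + (card (orbit alpha' ` U) + ?m))"
    using sign_orbits[OF permutation_compose[OF rho'_perm alpha'_perm]] sign_orbits[OF rho'_perm]
      sign_orbits[OF alpha'_perm] count_rho' count_alpha' count_phi by simp
  also have "\<dots> = (-1) ^ (2 * (?N + ?m) + (card (vert ` U) + card (orbit alpha' ` U)))"
    by (simp only: power_add[symmetric]) (rule arg_cong[where f="\<lambda>n. (-1::int)^n"], simp)
  also have "\<dots> = (-1) ^ (card (vert ` U) + card (orbit alpha' ` U))"
    by (simp add: power_add power_mult)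
  finally have "(-1::int) ^ (?N + ?m) * (-1) ^ (card ((\<lambda>d. orbit (induced_rot \<sigma> U \<circ> \<alpha>) d) ` U)) =
     (-1) ^ (card (vert ` U) + card (orbit alpha' ` U))"
    by (simp add: power_add algebra_simps)
  moreover have "(-1::int) ^ (?N + ?m) = (-1) ^ (card U)"
  proof -
    have "?N = card (U \<union> - U)" by simp
    also have "\<dots> = card U + ?m" by (rule card_Un_disjoint) auto
    finally have "?N = card U + ?m" .
    then have "?N + ?m = card U + 2 * ?m" by simp
    then show ?thesis by (simp add: power_add power_mult)
  qed
  ultimately show ?thesis by (simp add: power_add)
qed

end

lemma neg1_parity: "(-1::int) ^ a = (-1) ^ b \<Longrightarrow> even a = even b"
  by (cases "even a"; cases "even b") auto

lemma parity_H:
  assumes HE: "H \<subseteq> edges \<alpha>"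
  shows "even (s_nbhd V vert \<sigma> \<alpha> H)"
proof -
  define U where "U = \<Union>H"
  have Ua: "\<And>d. d \<in> U \<Longrightarrow> \<alpha> d \<in> U" using Ualpha[OF HE] U_def by blast
  have Hform: "\<And>h. h \<in> H \<Longrightarrow> \<exists>e. h = {e, \<alpha> e}" using HE unfolding edges_def by blast
  have orbH: "orbit (alpha' U) ` U = H"
  proof
    show "orbit (alpha' U) ` U \<subseteq> H"
    proof
      fix x assume "x \<in> orbit (alpha' U) ` U"
      then obtain d where d: "d \<in> U" "x = {d, \<alpha> d}" using alpha'_orbit[OF Ua] by auto
      then obtain h where h: "h \<in> H" "d \<in> h" using U_def by auto
      then obtain e where "h = {e, \<alpha> e}" using Hform by blast
      then have "h = {d, \<alpha> d}" using h(2) aa by auto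
      then show "x \<in> H" using d h by simp
    qed
    show "H \<subseteq> orbit (alpha' U) ` U"
    proof
      fix h assume h: "h \<in> H"
      then obtain e where e: "h = {e, \<alpha> e}" using Hform by blast
      then have "e \<in> U" using h U_def by auto
      then show "h \<in> orbit (alpha' U) ` U" using alpha'_orbit[OF Ua] e by auto
    qed
  qed
  have finH: "finite H" using HE by (simp add: finite_subset)
  have cardU: "card U = 2 * card H"
  proof -
    have "card U = sum card H" unfolding U_def
    proof (rule card_Union_disjoint)
      show "pairwise disjnt H"
      proof (rule pairwiseI)
        fix x y assume xy: "x \<in> H" "y \<in> H" "x \<noteq> y"
        obtain e where e: "x = {e, \<alpha> e}" using Hform xy(1) by blast
        obtain f where f: "y = {f, \<alpha> f}" using Hform xy(2) by blast
        show "disjnt x y" using e f xy(3) aa unfolding disjnt_def by (auto simp: a_inj)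
      qed
    qed (auto)
    also have "\<dots> = sum (\<lambda>_. 2) H"
    proof (rule sum.cong[OF refl])
      fix h assume "h \<in> H"
      then obtain e where "h = {e, \<alpha> e}" using Hform by blast
      then show "card h = 2" using an[of e] by auto
    qed
    finally show ?thesis by simp
  qed
  have par: "(-1::int) ^ (card U + card ((\<lambda>d. orbit (induced_rot \<sigma> U \<circ> \<alpha>) d) ` U)) =
     (-1) ^ (card (vert ` U) + card H)"
    using parity_U[OF Ua] orbH by simp
  define f where "f = card ((\<lambda>d. orbit (induced_rot \<sigma> U \<circ> \<alpha>) d) ` U)"
  have pf: "even (f + card (vert ` U) + card H)"
    using neg1_parity[OF par[folded f_def]] cardU by auto
  have nd: "{v \<in> V. \<forall>d. vert d = v \<longrightarrow> d \<notin> U} = V - vert ` U" by auto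
  have vU: "vert ` U \<subseteq> V" using vertV by auto
  have cV: "card V = card (vert ` U) + card (V - vert ` U)"
    using card_Diff_subset[OF finite_subset[OF vU finV] vU] card_mono[OF finV vU] by simp
  have bc: "bc V vert \<sigma> \<alpha> H = f + card (V - vert ` U)"
    unfolding bc_def U_def[symmetric] f_def nd by (simp add: Setcompr_eq_image)
  show ?thesis
    unfolding s_nbhd_def bc using cV pf by simp blast
qed

end

definition gen_rel :: "('a \<times> 'a) set \<Rightarrow> ('a \<times> 'a) set" where
  "gen_rel S = (S \<union> S\<inverse>)\<^sup>*"

definition const_on :: "('d \<times> 'd) set \<Rightarrow> real ^ 'd \<Rightarrow> bool" where
  "const_on R A \<longleftrightarrow> (\<forall>(x, y) \<in> R. A $ x = A $ y)"

definition ind :: "'d set \<Rightarrow> real ^ 'd" where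
  "ind c = (\<chi> d. if d \<in> c then 1 else 0)"

lemma gen_rel_equiv: "equiv UNIV (gen_rel S)"
  unfolding gen_rel_def equiv_def
  by (auto simp: refl_on_def sym_rtrancl sym_Un_converse trans_rtrancl)

lemma gen_rel_mono: "S \<subseteq> T \<Longrightarrow> gen_rel S \<subseteq> gen_rel T"
  unfolding gen_rel_def by (intro rtrancl_mono) auto

lemma gen_rel_base: "(x, y) \<in> S \<Longrightarrow> (x, y) \<in> gen_rel S"
  unfolding gen_rel_def by auto

lemma const_on_gen: "const_on (gen_rel S) A \<longleftrightarrow> const_on S A"
proof
  assume "const_on (gen_rel S) A" then show "const_on S A"
    unfolding const_on_def using gen_rel_base by fast
next
  assume c: "const_on S A"
  show "const_on (gen_rel S) A" unfolding const_on_def gen_rel_def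
  proof (clarify)
    fix x y assume "(x, y) \<in> (S \<union> S\<inverse>)\<^sup>*"
    then show "A $ x = A $ y"
      by (induction rule: rtrancl_induct) (use c in \<open>auto simp: const_on_def\<close>)
  qed
qed

lemma const_onD: "const_on R A \<Longrightarrow> (x, y) \<in> R \<Longrightarrow> A $ x = A $ y"
  unfolding const_on_def by auto

lemma const_onI: "(\<And>x y. (x, y) \<in> R \<Longrightarrow> A $ x = A $ y) \<Longrightarrow> const_on R A"
  unfolding const_on_def by auto

lemma const_on_subspace: "subspace {A. const_on R A}"
  unfolding subspace_def
proof (intro conjI ballI allI)
  show "0 \<in> {A. const_on R A}" by (auto intro: const_onI)
  fix x y assume "x \<in> {A. const_on R A}" "y \<in> {A. const_on R A}"
  then show "x + y \<in> {A. const_on R A}"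
    by (auto intro!: const_onI) (metis const_onD)
next
  fix c :: real and x assume "x \<in> {A. const_on R A}"
  then show "c *\<^sub>R x \<in> {A. const_on R A}"
    by (auto intro!: const_onI) (metis const_onD)
qed

lemma quot_mem: assumes "equiv UNIV R" "c \<in> UNIV // R"
  shows "d \<in> c \<longleftrightarrow> c = R `` {d}"
proof -
  obtain x where x: "c = R `` {x}" using assms(2) by (auto elim: quotientE)
  show ?thesis unfolding x using assms(1) by (auto simp: equiv_class_eq_iff Image_singleton_iff)
qed

lemma ind_const: assumes "equiv UNIV R" "c \<in> UNIV // R" shows "const_on R (ind c)"
  unfolding const_on_def ind_def
proof clarify
  fix x y assume "(x, y) \<in> R"
  then have "R `` {x} = R `` {y}" using assms(1) by (simp add: equiv_class_eq_iff)
  then show "(\<chi> d. if d \<in> c then 1 else 0) $ x = (\<chi> d. if d \<in> c then 1 else 0) $ y"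
    using quot_mem[OF assms] by simp
qed

lemma ind_sum_component:
  assumes "equiv UNIV R" "Q' \<subseteq> UNIV // R"
  shows "(\<Sum>c\<in>Q'. f c *\<^sub>R ind c) $ d = (if R `` {d} \<in> Q' then f (R `` {d}) else 0)"
proof -
  have "(\<Sum>c\<in>Q'. f c *\<^sub>R ind c) $ d = (\<Sum>c\<in>Q'. if c = R `` {d} then f c else 0)"
    unfolding sum_component
  proof (rule sum.cong[OF refl])
    fix c assume "c \<in> Q'"
    then have "d \<in> c \<longleftrightarrow> c = R `` {d}" using quot_mem[OF assms(1)] assms(2) by blast
    then show "(f c *\<^sub>R ind c) $ d = (if c = R `` {d} then f c else 0)"
      by (simp add: ind_def)
  qed
  also have "\<dots> = (if R `` {d} \<in> Q' then f (R `` {d}) else 0)"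
  proof -
    have "finite Q'" by simp
    then show ?thesis by (simp add: sum.delta')
  qed
  finally show ?thesis .
qed

lemma class_self: "equiv UNIV R \<Longrightarrow> d \<in> R `` {d}"
  by (meson equiv_class_self iso_tuple_UNIV_I)

lemma in_span_ind:
  assumes eq: "equiv UNIV R" and Q: "Q' \<subseteq> UNIV // R" and c: "const_on R A"
    and z: "\<And>c y. c \<in> UNIV // R \<Longrightarrow> c \<notin> Q' \<Longrightarrow> y \<in> c \<Longrightarrow> A $ y = 0"
  shows "A \<in> span (ind ` Q')"
proof -
  define s where "s c = A $ (SOME y. y \<in> c)" for c
  have "A = (\<Sum>c\<in>Q'. s c *\<^sub>R ind c)"
  proof (rule iffD2[OF vec_eq_iff], rule allI)
    fix d
    show "A $ d = (\<Sum>c\<in>Q'. s c *\<^sub>R ind c) $ d"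
      unfolding ind_sum_component[OF eq Q]
    proof (cases "R `` {d} \<in> Q'")
      case True
      have "(SOME y. y \<in> R `` {d}) \<in> R `` {d}" using class_self[OF eq] by (rule someI)
      then have "(d, SOME y. y \<in> R `` {d}) \<in> R" by simp
      then have "A $ d = s (R `` {d})" using c unfolding s_def const_on_def by auto
      then show "A $ d = (if R `` {d} \<in> Q' then s (R `` {d}) else 0)" using True by simp
    next
      case False
      have "R `` {d} \<in> UNIV // R" by (auto intro: quotientI)
      then have "A $ d = 0" using z False class_self[OF eq] by blast
      then show "A $ d = (if R `` {d} \<in> Q' then s (R `` {d}) else 0)" using False by simp
    qed
  qed
  also have "\<dots> \<in> span (ind ` Q')"
    by (intro span_sum span_scale span_base) auto
  finally show ?thesis .
qed

lemma span_ind: assumes eq: "equiv UNIV R"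
  shows "span (ind ` (UNIV // R)) = {A. const_on R A}"
proof
  show "span (ind ` (UNIV // R)) \<subseteq> {A. const_on R A}"
    by (rule span_minimal) (use ind_const[OF eq] const_on_subspace in auto)
  show "{A. const_on R A} \<subseteq> span (ind ` (UNIV // R))"
    using in_span_ind[OF eq subset_refl] by auto
qed

lemma ind_inj: "inj ind"
proof (rule injI)
  fix c c' :: "'d::finite set" assume eq: "ind c = ind c'"
  show "c = c'"
  proof (rule set_eqI)
    fix d
    have "(if d \<in> c then 1 else 0 :: real) = (if d \<in> c' then 1 else 0)"
      using arg_cong[where f="\<lambda>v. v $ d", OF eq] by (simp add: ind_def)
    then show "d \<in> c \<longleftrightarrow> d \<in> c'" by (auto split: if_splits)
  qed
qed

lemma ind_indep:
  assumes eq: "equiv UNIV R" and Q: "Q' \<subseteq> UNIV // R"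
  shows "independent (ind ` Q')" "dim (span (ind ` Q')) = card Q'"
proof -
  have ne: "c \<noteq> {}" if "c \<in> Q'" for c using that Q class_self[OF eq] by (auto elim!: quotientE)
  have dj: "c \<inter> c' = {}" if "c \<in> Q'" "c' \<in> Q'" "c \<noteq> c'" for c c'
    using that Q quot_mem[OF eq] by blast
  show ind: "independent (ind ` Q')"
  proof (rule pairwise_orthogonal_independent)
    show "pairwise orthogonal (ind ` Q')"
    proof (rule pairwiseI, clarify)
      fix c c' assume cc: "c \<in> Q'" "c' \<in> Q'" "ind c \<noteq> ind c'"
      then have "c \<noteq> c'" by auto
      then have "c \<inter> c' = {}" using dj cc by blast
      then show "orthogonal (ind c) (ind c')"
        unfolding orthogonal_def inner_vec_def ind_def by (auto intro!: sum.neutral)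
    qed
    show "0 \<notin> ind ` Q'"
    proof
      assume "0 \<in> ind ` Q'"
      then obtain c where c: "c \<in> Q'" "ind c = 0" by auto
      then obtain d where "d \<in> c" using ne by blast
      then have "ind c $ d = 1" by (simp add: ind_def)
      then show False using c by simp
    qed
  qed
  have "dim (span (ind ` Q')) = card (ind ` Q')" using dim_span_eq_card_independent[OF ind] .
  also have "\<dots> = card Q'" using card_image[OF inj_on_subset[OF ind_inj subset_UNIV]] .
  finally show "dim (span (ind ` Q')) = card Q'" .
qed

lemma KLA:
  fixes R1 R2 :: "('d::finite \<times> 'd) set" and L :: "real ^ 'd \<Rightarrow> real ^ 'd"
  assumes lin: "linear L" and e1: "equiv UNIV R1" and e2: "equiv UNIV R2" and sub: "R1 \<subseteq> R2"
    and kill: "\<And>K. K \<in> UNIV // R2 \<Longrightarrow> L (ind K) = 0"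
    and ker: "\<And>A. const_on R1 A \<Longrightarrow> L A = 0 \<Longrightarrow> const_on R2 A"
  shows "dim (L ` {A. const_on R1 A}) + card (UNIV // R2) = card (UNIV // R1)"
proof -
  define Q1 where "Q1 = UNIV // R1"
  define Q2 where "Q2 = UNIV // R2"
  have Q2s: "Q2 \<subseteq> UNIV // R2" unfolding Q2_def by simp
  define xK where "xK K = (SOME x. x \<in> K)" for K :: "'d set"
  define rep where "rep K = R1 `` {xK K}" for K
  have xK: "xK K \<in> K" if KQ: "K \<in> Q2" for K
  proof -
    obtain x where "K = R2 `` {x}" using KQ unfolding Q2_def quotient_def by blast
    then have "x \<in> K" using class_self[OF e2] by simp
    then show ?thesis unfolding xK_def by (rule someI)
  qed
  have KR: "K = R2 `` {y}" if "K \<in> Q2" "y \<in> K" for K y using quot_mem[OF e2] that Q2_def by blast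
  have repQ1: "rep K \<in> Q1" for K unfolding rep_def Q1_def by (auto intro: quotientI)
  have repK: "rep K \<subseteq> K" if "K \<in> Q2" for K
  proof
    fix y assume "y \<in> rep K"
    then have "(xK K, y) \<in> R2" using sub unfolding rep_def by auto
    then have "y \<in> R2 `` {xK K}" by simp
    then show "y \<in> K" using KR[OF that xK[OF that]] by blast
  qed
  have xrep: "xK K \<in> rep K" for K unfolding rep_def using class_self[OF e1] .
  have repinj: "inj_on rep Q2"
  proof (rule inj_onI)
    fix K K' assume K: "K \<in> Q2" "K' \<in> Q2" "rep K = rep K'"
    then have "xK K \<in> K'" using xrep repK by blast
    then show "K = K'" using KR[OF K(1) xK[OF K(1)]] KR[OF K(2)] by simp
  qed
  define Q1' where "Q1' = Q1 - rep ` Q2"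
  have Q1'sub: "Q1' \<subseteq> UNIV // R1" unfolding Q1'_def Q1_def by auto
  have cQ: "card Q1' + card Q2 = card Q1"
  proof -
    have s: "rep ` Q2 \<subseteq> Q1" using repQ1 by auto
    have "card (rep ` Q2) = card Q2" using card_image[OF repinj] .
    moreover have "card Q1' = card Q1 - card (rep ` Q2)"
      unfolding Q1'_def using s by (simp add: card_Diff_subset)
    moreover have "card (rep ` Q2) \<le> card Q1" using s by (simp add: card_mono)
    ultimately show ?thesis by simp
  qed
  define X where "X = ind ` Q1'"
  have spanX: "span X \<subseteq> {A. const_on R1 A}"
    unfolding X_def by (rule span_minimal) (use ind_const[OF e1] Q1'sub const_on_subspace in auto)
  have c1: "L ` {A. const_on R1 A} = L ` span X"
  proof
    show "L ` span X \<subseteq> L ` {A. const_on R1 A}" using spanX by auto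
    show "L ` {A. const_on R1 A} \<subseteq> L ` span X"
    proof
      fix w assume "w \<in> L ` {A. const_on R1 A}"
      then obtain A where A: "const_on R1 A" "w = L A" by auto
      define S where "S = (\<Sum>K\<in>Q2. (A $ xK K) *\<^sub>R ind K)"
      define B where "B = A - S"
      have Sc: "const_on R1 S"
      proof -
        have "S \<in> {A. const_on R1 A}" unfolding S_def
        proof (intro subspace_sum[OF const_on_subspace] subspace_scale[OF const_on_subspace])
          fix K assume "K \<in> Q2"
          then have "const_on R2 (ind K)" using ind_const[OF e2] Q2_def by simp
          then show "ind K \<in> {A. const_on R1 A}" using sub by (auto intro!: const_onI dest: const_onD)
        qed
        then show ?thesis by simp
      qed
      have Bc: "const_on R1 B" unfolding B_def
        using subspace_diff[OF const_on_subspace[of R1], of A S] A(1) Sc by simp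
      have "B \<in> span (ind ` Q1')"
      proof (rule in_span_ind[OF e1 Q1'sub Bc])
        fix c y assume c: "c \<in> UNIV // R1" "c \<notin> Q1'" "y \<in> c"
        then obtain K where K: "K \<in> Q2" "c = rep K" unfolding Q1'_def Q1_def by auto
        have yK: "y \<in> K" using repK[OF K(1)] c(3) K(2) by auto
        have "S $ y = A $ xK (R2 `` {y})"
          unfolding S_def ind_sum_component[OF e2 Q2s]
          using KR[OF K(1) yK] K(1) by simp
        also have "\<dots> = A $ xK K" using KR[OF K(1) yK] by simp
        also have "\<dots> = A $ y"
        proof -
          have "(xK K, y) \<in> R1" using c(3) K(2) unfolding rep_def by simp
          then show ?thesis using const_onD[OF A(1)] by simp
        qed
        finally show "B $ y = 0" unfolding B_def by simp
      qed
      moreover have "L A = L B"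
      proof -
        have "L S = (\<Sum>K\<in>Q2. (A $ xK K) *\<^sub>R L (ind K))"
          unfolding S_def by (simp add: linear_sum[OF lin] linear_scale[OF lin])
        also have "\<dots> = 0" using kill Q2_def by simp
        finally have "L S = 0" .
        moreover have "A = B + S" unfolding B_def by simp
        ultimately show ?thesis by (simp add: linear_add[OF lin])
      qed
      ultimately show "w \<in> L ` span X" using A(2) X_def by auto
    qed
  qed
  have inj: "inj_on L (span X)"
    unfolding linear_inj_on_iff_eq_0[OF lin subspace_span]
  proof (intro ballI impI)
    fix A assume A: "A \<in> span X" "L A = 0"
    have c1A: "const_on R1 A" using spanX A(1) by auto
    have c2A: "const_on R2 A" using ker[OF c1A A(2)] .
    have zr: "A $ y = 0" if "K \<in> Q2" "y \<in> rep K" for K y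
    proof -
      have sy: "subspace {v :: real ^ 'd. v $ y = 0}" unfolding subspace_def by auto
      have "X \<subseteq> {v. v $ y = 0}"
      proof
        fix v assume "v \<in> X"
        then obtain c where c: "c \<in> Q1'" "v = ind c" unfolding X_def by auto
        have "y \<notin> c"
        proof
          assume "y \<in> c"
          then have "c = R1 `` {y}" using quot_mem[OF e1] c(1) Q1'sub by blast
          moreover have "rep K = R1 `` {y}" using quot_mem[OF e1 repQ1[of K, unfolded Q1_def]] that(2) by blast
          ultimately show False using c(1) that(1) unfolding Q1'_def by auto
        qed
        then show "v \<in> {v. v $ y = 0}" using c(2) by (simp add: ind_def)
      qed
      then have "span X \<subseteq> {v. v $ y = 0}" using span_minimal[OF _ sy] by blast
      then show ?thesis using A(1) by auto
    qed
    show "A = 0"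
    proof (rule iffD2[OF vec_eq_iff], rule allI)
      fix d
      define K where "K = R2 `` {d}"
      have K: "K \<in> Q2" unfolding K_def Q2_def by (auto intro: quotientI)
      have "xK K \<in> K" using xK[OF K] .
      then have "(d, xK K) \<in> R2" unfolding K_def by simp
      then have "A $ d = A $ xK K" using const_onD[OF c2A] by simp
      also have "\<dots> = 0" using zr[OF K xrep] .
      finally show "A $ d = 0 $ d" by simp
    qed
  qed
  have "dim (L ` {A. const_on R1 A}) = dim (L ` span X)" using c1 by simp
  also have "\<dots> = dim (span X)" using dim_image_eq[OF lin, of "span X"] inj by (simp add: span_span)
  also have "\<dots> = card Q1'" unfolding X_def using ind_indep(2)[OF e1 Q1'sub] .
  finally show ?thesis using cQ Q1_def Q2_def by simp
qed

definition Lmap :: "('d::finite \<Rightarrow> 'd) \<Rightarrow> real ^ 'd \<Rightarrow> real ^ 'd" where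
  "Lmap \<alpha> A = (\<chi> d. A $ d - A $ (\<alpha> d))"

lemma Lmap_linear: "linear (Lmap \<alpha>)"
  by (rule linearI) (simp_all add: Lmap_def vec_eq_iff algebra_simps)

lemma Lmap_comp: "Lmap \<alpha> A $ d = A $ d - A $ (\<alpha> d)"
  by (simp add: Lmap_def)

lemma equiv_class_iff: "equiv UNIV R \<Longrightarrow> R `` {x} = R `` {y} \<longleftrightarrow> (x, y) \<in> R"
  by (simp add: equiv_class_eq_iff)

lemma quotient_image: "UNIV // R = (\<lambda>x. R `` {x}) ` UNIV"
  unfolding quotient_def by auto

lemma equiv_rtrancl_sym: "sym R \<Longrightarrow> equiv UNIV (R\<^sup>*)"
  unfolding equiv_def by (auto simp: refl_on_def sym_rtrancl trans_rtrancl)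

lemma equivD: assumes "equiv UNIV R"
  shows "(x, y) \<in> R \<Longrightarrow> (y, x) \<in> R" "(x, y) \<in> R \<Longrightarrow> (y, z) \<in> R \<Longrightarrow> (x, z) \<in> R" "(x, x) \<in> R"
  using assms unfolding equiv_def refl_on_def sym_def trans_def by blast+

context rgl
begin

definition Sf where "Sf = {(d, \<sigma> (\<alpha> d)) | d. True}"

lemma pf: "permutation (\<sigma> \<circ> \<alpha>)"
proof -
  have "\<alpha> \<circ> \<alpha> = id" using aa by (simp add: fun_eq_iff)
  then have "bij \<alpha>" by (intro o_bij) 
  then show ?thesis using bs by (simp add: perm_fin bij_comp)
qed

lemma face_orbit: "orbit (\<sigma> \<circ> \<alpha>) d = gen_rel Sf `` {d}"
proof
  show "orbit (\<sigma> \<circ> \<alpha>) d \<subseteq> gen_rel Sf `` {d}"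
  proof (rule orbit_minimal)
    show "d \<in> gen_rel Sf `` {d}" using class_self[OF gen_rel_equiv] .
    fix y assume "y \<in> gen_rel Sf `` {d}"
    then have dy: "(d, y) \<in> gen_rel Sf" by simp
    have "(y, \<sigma> (\<alpha> y)) \<in> Sf" unfolding Sf_def by blast
    then have "(y, (\<sigma> \<circ> \<alpha>) y) \<in> gen_rel Sf" by (simp add: gen_rel_base)
    then have "(d, (\<sigma> \<circ> \<alpha>) y) \<in> gen_rel Sf" by (rule equivD(2)[OF gen_rel_equiv dy])
    then show "(\<sigma> \<circ> \<alpha>) y \<in> gen_rel Sf `` {d}" by simp
  qed
  show "gen_rel Sf `` {d} \<subseteq> orbit (\<sigma> \<circ> \<alpha>) d"
  proof
    fix y assume "y \<in> gen_rel Sf `` {d}"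
    then have "(d, y) \<in> (Sf \<union> Sf\<inverse>)\<^sup>*" unfolding gen_rel_def by simp
    then show "y \<in> orbit (\<sigma> \<circ> \<alpha>) d"
    proof (induction rule: rtrancl_induct)
      case base then show ?case by (rule orbit_self)
    next
      case (step y z)
      show ?case
      proof (cases "(y, z) \<in> Sf")
        case True
        then have "z = (\<sigma> \<circ> \<alpha>) y" unfolding Sf_def by auto
        then show ?thesis using orbit_step[OF step.IH] by simp
      next
        case False
        then have "(z, y) \<in> Sf" using step.hyps(2) by blast
        then have "y = (\<sigma> \<circ> \<alpha>) z" unfolding Sf_def by auto
        then have "y \<in> orbit (\<sigma> \<circ> \<alpha>) z" using orbit_step[OF orbit_self[of z "\<sigma> \<circ> \<alpha>"]] by simp
        then have "z \<in> orbit (\<sigma> \<circ> \<alpha>) y" by (rule orbit_sym[OF pf])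
        then show ?thesis using orbit_sub[OF step.IH] by (rule subsetD[rotated])
      qed
    qed
  qed
qed

lemma faces_quot: "faces \<sigma> \<alpha> = UNIV // gen_rel Sf"
  unfolding faces_def quotient_image face_orbit by auto

lemma face_chain_L: "face_chain \<alpha> f = Lmap \<alpha> (ind f)"
  by (simp add: face_chain_def Lmap_def ind_def vec_eq_iff)

lemma span_faces: "span (face_chain \<alpha> ` faces \<sigma> \<alpha>) = Lmap \<alpha> ` {A. const_on Sf A}"
proof -
  have "face_chain \<alpha> ` faces \<sigma> \<alpha> = Lmap \<alpha> ` (ind ` faces \<sigma> \<alpha>)"
    using face_chain_L by (auto simp: image_image)
  then have "span (face_chain \<alpha> ` faces \<sigma> \<alpha>) = Lmap \<alpha> ` span (ind ` faces \<sigma> \<alpha>)"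
    using span_linear_image[OF Lmap_linear] by simp
  also have "span (ind ` faces \<sigma> \<alpha>) = {A. const_on Sf A}"
    unfolding faces_quot span_ind[OF gen_rel_equiv] const_on_gen ..
  finally show ?thesis .
qed

lemma fib_bij: "bij_betw \<sigma> {d. vert d = v} {d. vert d = v}"
proof (rule bij_betw_imageI)
  show "inj_on \<sigma> {d. vert d = v}" using inj_on_subset[OF bij_is_inj[OF bs] subset_UNIV] .
  show "\<sigma> ` {d. vert d = v} = {d. vert d = v}"
  proof
    show "\<sigma> ` {d. vert d = v} \<subseteq> {d. vert d = v}" using vs by auto
    show "{d. vert d = v} \<subseteq> \<sigma> ` {d. vert d = v}"
    proof
      fix y assume y: "y \<in> {d. vert d = v}"
      have e: "\<sigma> (inv \<sigma> y) = y" using surj_f_inv_f[OF bij_is_surj[OF bs]] .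
      then have "vert (inv \<sigma> y) = v" using vs[of "inv \<sigma> y"] y by simp
      then show "y \<in> \<sigma> ` {d. vert d = v}" using e by (intro image_eqI[where x="inv \<sigma> y"]) simp_all
    qed
  qed
qed

definition Sa where "Sa U = {(d, \<alpha> d) | d. d \<notin> U}"

lemma cycles_inter:
  fixes H
  defines "U \<equiv> \<Union>H"
  assumes HE: "H \<subseteq> edges \<alpha>"
  shows "cycles vert \<alpha> H \<inter> Lmap \<alpha> ` {A. const_on Sf A} = Lmap \<alpha> ` {A. const_on (gen_rel (Sf \<union> Sa U)) A}"
proof
  show "cycles vert \<alpha> H \<inter> Lmap \<alpha> ` {A. const_on Sf A} \<subseteq> Lmap \<alpha> ` {A. const_on (gen_rel (Sf \<union> Sa U)) A}"
  proof
    fix v assume "v \<in> cycles vert \<alpha> H \<inter> Lmap \<alpha> ` {A. const_on Sf A}"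
    then obtain A where A: "const_on Sf A" "v = Lmap \<alpha> A" "v \<in> cycles vert \<alpha> H" by auto
    have "const_on (Sf \<union> Sa U) A"
    proof (rule const_onI)
      fix x y assume "(x, y) \<in> Sf \<union> Sa U"
      then show "A $ x = A $ y"
      proof
        assume "(x, y) \<in> Sf" then show ?thesis using const_onD[OF A(1)] by simp
      next
        assume "(x, y) \<in> Sa U"
        then have xy: "y = \<alpha> x" "x \<notin> U" by (auto simp: Sa_def)
        then have "v $ x = 0" using A(3) unfolding cycles_def U_def by auto
        then show ?thesis using xy A(2) by (simp add: Lmap_comp)
      qed
    qed
    then show "v \<in> Lmap \<alpha> ` {A. const_on (gen_rel (Sf \<union> Sa U)) A}" using A(2) const_on_gen by auto
  qed
  show "Lmap \<alpha> ` {A. const_on (gen_rel (Sf \<union> Sa U)) A} \<subseteq> cycles vert \<alpha> H \<inter> Lmap \<alpha> ` {A. const_on Sf A}"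
  proof
    fix v assume "v \<in> Lmap \<alpha> ` {A. const_on (gen_rel (Sf \<union> Sa U)) A}"
    then obtain A where A: "const_on (Sf \<union> Sa U) A" "v = Lmap \<alpha> A" using const_on_gen by auto
    have Af: "const_on Sf A" using A(1) by (auto intro!: const_onI dest: const_onD)
    have Aa: "A $ d = A $ (\<alpha> d)" if "d \<notin> U" for d
      using const_onD[OF A(1), of d "\<alpha> d"] that by (auto simp: Sa_def)
    have As: "A $ (\<alpha> d) = A $ (\<sigma> d)" for d
      using const_onD[OF Af, of "\<alpha> d" "\<sigma> (\<alpha> (\<alpha> d))"] aa by (auto simp: Sf_def)
    have "v \<in> cycles vert \<alpha> H" unfolding cycles_def
    proof (intro CollectI conjI allI impI)
      fix d show "v $ \<alpha> d = - v $ d" using A(2) aa by (simp add: Lmap_comp)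
    next
      fix d assume "d \<notin> \<Union>H" then show "v $ d = 0" using A(2) Aa U_def by (simp add: Lmap_comp)
    next
      fix w
      have "(\<Sum>d\<in>{d. vert d = w}. v $ d) = (\<Sum>d\<in>{d. vert d = w}. A $ d) - (\<Sum>d\<in>{d. vert d = w}. A $ (\<sigma> d))"
        using A(2) As by (simp add: Lmap_comp sum_subtractf)
      also have "(\<Sum>d\<in>{d. vert d = w}. A $ (\<sigma> d)) = (\<Sum>d\<in>{d. vert d = w}. A $ d)"
        using sum.reindex_bij_betw[OF fib_bij, of "\<lambda>d. A $ d"] .
      finally show "(\<Sum>d\<in>{d. vert d = w}. v $ d) = 0" by simp
    qed
    then show "v \<in> cycles vert \<alpha> H \<inter> Lmap \<alpha> ` {A. const_on Sf A}" using A(2) Af by auto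
  qed
qed

end

context rgl
begin

lemma k_eq:
  assumes HE: "H \<subseteq> edges \<alpha>"
  shows "k_ker vert \<sigma> \<alpha> H + card (UNIV // gen_rel (Sf \<union> Sa {})) = card (UNIV // gen_rel (Sf \<union> Sa (\<Union>H)))"
proof -
  let ?R1 = "gen_rel (Sf \<union> Sa (\<Union>H))" and ?R2 = "gen_rel (Sf \<union> Sa {})"
  have "k_ker vert \<sigma> \<alpha> H = dim (Lmap \<alpha> ` {A. const_on ?R1 A})"
    unfolding k_ker_def span_faces cycles_inter[OF HE] ..
  moreover have "dim (Lmap \<alpha> ` {A. const_on ?R1 A}) + card (UNIV // ?R2) = card (UNIV // ?R1)"
  proof (rule KLA[OF Lmap_linear gen_rel_equiv gen_rel_equiv])
    show "?R1 \<subseteq> ?R2" by (rule gen_rel_mono) (auto simp: Sa_def)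
  next
    fix K assume K: "K \<in> UNIV // ?R2"
    show "Lmap \<alpha> (ind K) = 0"
    proof (rule iffD2[OF vec_eq_iff], rule allI)
      fix d
      have "(d, \<alpha> d) \<in> ?R2" by (rule gen_rel_base) (auto simp: Sa_def)
      then have "?R2 `` {d} = ?R2 `` {\<alpha> d}" by (simp add: equiv_class_iff[OF gen_rel_equiv])
      then have "d \<in> K \<longleftrightarrow> \<alpha> d \<in> K" using quot_mem[OF gen_rel_equiv K] by simp
      then show "Lmap \<alpha> (ind K) $ d = 0 $ d" by (simp add: Lmap_comp ind_def)
    qed
  next
    fix A assume A: "const_on ?R1 A" "Lmap \<alpha> A = 0"
    show "const_on ?R2 A" unfolding const_on_gen
    proof (rule const_onI)
      fix x y assume "(x, y) \<in> Sf \<union> Sa {}"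
      then show "A $ x = A $ y"
      proof
        assume "(x, y) \<in> Sf"
        then have "(x, y) \<in> ?R1" by (intro gen_rel_base) simp
        then show ?thesis using const_onD[OF A(1)] by simp
      next
        assume "(x, y) \<in> Sa {}"
        then have "y = \<alpha> x" by (simp add: Sa_def)
        moreover have "Lmap \<alpha> A $ x = 0" using A(2) by simp
        ultimately show ?thesis by (simp add: Lmap_comp)
      qed
    qed
  qed
  ultimately show ?thesis by simp
qed

end

lemma card_quot_kernel:
  assumes e: "equiv UNIV R" and e': "equiv UNIV Q"
    and iff: "\<And>x y. (x, y) \<in> R \<longleftrightarrow> (g x, g y) \<in> Q"
  shows "card (UNIV // R) = card ((\<lambda>x. Q `` {g x}) ` UNIV)"
  unfolding quotient_image
  by (rule card_eq_kernel) (simp add: equiv_class_iff[OF e] equiv_class_iff[OF e'] iff)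

context rgl
begin

abbreviation R2 where "R2 \<equiv> gen_rel (Sf \<union> Sa {})"

lemma R2_sigma: "(d, \<sigma> d) \<in> R2"
proof -
  have "(d, \<alpha> d) \<in> R2" by (rule gen_rel_base) (auto simp: Sa_def)
  moreover have "(\<alpha> d, \<sigma> (\<alpha> (\<alpha> d))) \<in> R2" by (rule gen_rel_base) (auto simp: Sf_def)
  then have "(\<alpha> d, \<sigma> d) \<in> R2" by (simp add: aa)
  ultimately show ?thesis by (rule equivD(2)[OF gen_rel_equiv])
qed

lemma R2_vert: assumes "vert x = vert y" shows "(x, y) \<in> R2"
proof -
  obtain n where n: "(\<sigma> ^^ n) x = y" using trans[OF assms] by blast
  have "(x, (\<sigma> ^^ k) x) \<in> R2" for k
  proof (induction k)
    case 0 show ?case using equivD(3)[OF gen_rel_equiv] by simp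
  next
    case (Suc k)
    have "((\<sigma> ^^ k) x, \<sigma> ((\<sigma> ^^ k) x)) \<in> R2" by (rule R2_sigma)
    then show ?case using equivD(2)[OF gen_rel_equiv Suc.IH] by simp
  qed
  then show ?thesis using n by blast
qed

definition Rv where "Rv = {(vert d, vert (\<alpha> d)) | d. d \<in> \<Union>(edges \<alpha>)}"

lemma UE: "\<Union>(edges \<alpha>) = UNIV" unfolding edges_def by auto

lemma Rv_iff: "(a, b) \<in> Rv \<longleftrightarrow> (\<exists>d. a = vert d \<and> b = vert (\<alpha> d))"
  unfolding Rv_def UE by auto

lemma Rv_sym: "sym Rv"
proof (rule symI)
  fix a b assume "(a, b) \<in> Rv"
  then obtain d where "a = vert d" "b = vert (\<alpha> d)" using Rv_iff by auto
  then show "(b, a) \<in> Rv" unfolding Rv_iff using aa by (auto intro!: exI[of _ "\<alpha> d"])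
qed

lemma R2_iff: "(x, y) \<in> R2 \<longleftrightarrow> (vert x, vert y) \<in> Rv\<^sup>*"
proof
  assume "(x, y) \<in> R2"
  then have "(x, y) \<in> ((Sf \<union> Sa {}) \<union> (Sf \<union> Sa {})\<inverse>)\<^sup>*" unfolding gen_rel_def by simp
  then show "(vert x, vert y) \<in> Rv\<^sup>*"
  proof (induction rule: rtrancl_induct)
    case (step y z)
    have one: "(vert y, vert z) \<in> Rv"
    proof -
      have "(y, z) \<in> Sf \<or> (z, y) \<in> Sf \<or> (y, z) \<in> Sa {} \<or> (z, y) \<in> Sa {}" using step.hyps(2) by blast
      then show ?thesis
      proof (elim disjE)
        assume "(y, z) \<in> Sf" then have "z = \<sigma> (\<alpha> y)" by (auto simp: Sf_def)
        then show ?thesis using Rv_iff vs by auto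
      next
        assume "(z, y) \<in> Sf" then have "y = \<sigma> (\<alpha> z)" by (auto simp: Sf_def)
        then have "(vert z, vert y) \<in> Rv" using Rv_iff vs by auto
        then show ?thesis using Rv_sym by (simp add: sym_def)
      next
        assume "(y, z) \<in> Sa {}" then have "z = \<alpha> y" by (auto simp: Sa_def)
        then show ?thesis using Rv_iff by auto
      next
        assume "(z, y) \<in> Sa {}" then have "y = \<alpha> z" by (auto simp: Sa_def)
        then have "(vert z, vert y) \<in> Rv" using Rv_iff by auto
        then show ?thesis using Rv_sym by (simp add: sym_def)
      qed
    qed
    show ?case using step.IH one by (rule rtrancl_into_rtrancl)
  qed simp
next
  assume xy: "(vert x, vert y) \<in> Rv\<^sup>*"
  have "\<forall>y. w = vert y \<longrightarrow> (x, y) \<in> R2" if "(vert x, w) \<in> Rv\<^sup>*" for w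
    using that
  proof (induction rule: rtrancl_induct)
    case base then show ?case using R2_vert by simp
  next
    case (step w1 w2)
    show ?case
    proof (intro allI impI)
      fix y assume y: "w2 = vert y"
      obtain e where e: "w1 = vert e" "w2 = vert (\<alpha> e)" using step.hyps(2) Rv_iff by auto
      have "(x, e) \<in> R2" using step.IH e(1) by simp
      moreover have "(e, \<alpha> e) \<in> R2" by (rule gen_rel_base) (auto simp: Sa_def)
      moreover have "(\<alpha> e, y) \<in> R2" using R2_vert e(2) y by simp
      ultimately show "(x, y) \<in> R2" by (meson equivD(2)[OF gen_rel_equiv])
    qed
  qed
  then show "(x, y) \<in> R2" using xy by blast
qed

definition iso where "iso = {v \<in> V. \<forall>d. vert d \<noteq> v}"

lemma L7: "card (UNIV // R2) + card iso = ncomp V vert \<alpha> (edges \<alpha>)"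
proof -
  have eqv: "equiv UNIV (Rv\<^sup>*)" by (rule equiv_rtrancl_sym[OF Rv_sym])
  have c1: "card (UNIV // R2) = card ((\<lambda>x. Rv\<^sup>* `` {vert x}) ` UNIV)"
    by (rule card_quot_kernel[OF gen_rel_equiv eqv R2_iff])
  have single: "Rv\<^sup>* `` {v} = {v}" if "v \<in> iso" for v
  proof -
    have "w = v" if "(v, w) \<in> Rv\<^sup>*" for w
      using that
    proof (cases rule: converse_rtranclE)
      case (step u)
      then show ?thesis using \<open>v \<in> iso\<close> Rv_iff unfolding iso_def by auto
    qed simp
    then show ?thesis by auto
  qed
  have S: "{(Rv\<^sup>*) `` {v} | v. v \<in> V} = (\<lambda>x. Rv\<^sup>* `` {vert x}) ` UNIV \<union> (\<lambda>v. {v}) ` iso"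
  proof
    show "{(Rv\<^sup>*) `` {v} | v. v \<in> V} \<subseteq> (\<lambda>x. Rv\<^sup>* `` {vert x}) ` UNIV \<union> (\<lambda>v. {v}) ` iso"
    proof
      fix S assume "S \<in> {(Rv\<^sup>*) `` {v} | v. v \<in> V}"
      then obtain v where v: "v \<in> V" "S = Rv\<^sup>* `` {v}" by auto
      show "S \<in> (\<lambda>x. Rv\<^sup>* `` {vert x}) ` UNIV \<union> (\<lambda>v. {v}) ` iso"
      proof (cases "v \<in> iso")
        case True then show ?thesis using single v by auto
      next
        case False
        then obtain d where "vert d = v" using v(1) unfolding iso_def by auto
        then show ?thesis using v by auto
      qed
    qed
    show "(\<lambda>x. Rv\<^sup>* `` {vert x}) ` UNIV \<union> (\<lambda>v. {v}) ` iso \<subseteq> {(Rv\<^sup>*) `` {v} | v. v \<in> V}"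
      using single vertV unfolding iso_def by auto
  qed
  have D: "(\<lambda>x. Rv\<^sup>* `` {vert x}) ` UNIV \<inter> (\<lambda>v. {v}) ` iso = {}"
  proof (rule ccontr)
    assume "(\<lambda>x. Rv\<^sup>* `` {vert x}) ` UNIV \<inter> (\<lambda>v. {v}) ` iso \<noteq> {}"
    then obtain x v where xv: "v \<in> iso" "Rv\<^sup>* `` {vert x} = {v}" by auto
    then have "vert x = v" using class_self[OF eqv, of "vert x"] by auto
    then show False using xv(1) unfolding iso_def by auto
  qed
  have "ncomp V vert \<alpha> (edges \<alpha>) = card ((\<lambda>x. Rv\<^sup>* `` {vert x}) ` UNIV \<union> (\<lambda>v. {v}) ` iso)"
    unfolding ncomp_def Rv_def[symmetric] S ..
  also have "\<dots> = card ((\<lambda>x. Rv\<^sup>* `` {vert x}) ` UNIV) + card ((\<lambda>v. {v}) ` iso)"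
    by (rule card_Un_disjoint[OF _ _ D]) (auto simp: iso_def finV)
  also have "card ((\<lambda>v. {v}) ` iso) = card iso" by (rule card_image) (auto simp: inj_on_def)
  finally show ?thesis using c1 by simp
qed

end

context rgl
begin

lemma L6:
  assumes HE: "H \<subseteq> edges \<alpha>"
  shows "card (UNIV // gen_rel (Sf \<union> Sa (\<Union>H))) + card iso = ncomp_compl V vert \<sigma> \<alpha> H"
proof -
  define U where "U = \<Union>H"
  have Ua: "\<And>d. d \<in> U \<Longrightarrow> \<alpha> d \<in> U" unfolding U_def by (rule Ualpha[OF HE])
  define R1 where "R1 = gen_rel (Sf \<union> Sa U)"
  define g where "g d = gen_rel Sf `` {d}" for d
  define Rf where "Rf = {(f1, f2) | f1 f2 d. f1 \<in> faces \<sigma> \<alpha> \<and> f2 \<in> faces \<sigma> \<alpha> \<and>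
                               d \<notin> \<Union>H \<and> d \<in> f1 \<and> \<alpha> d \<in> f2}"
  have faces_g: "faces \<sigma> \<alpha> = range g" unfolding faces_quot quotient_image g_def ..
  have gself: "d \<in> g d" for d unfolding g_def by (rule class_self[OF gen_rel_equiv])
  have gmem: "x \<in> g y \<longleftrightarrow> g x = g y" for x y
  proof -
    have "x \<in> g y \<longleftrightarrow> (y, x) \<in> gen_rel Sf" unfolding g_def by simp
    also have "\<dots> \<longleftrightarrow> (x, y) \<in> gen_rel Sf" by (rule iffI; erule equivD(1)[OF gen_rel_equiv])
    also have "\<dots> \<longleftrightarrow> g x = g y" unfolding g_def by (simp add: equiv_class_iff[OF gen_rel_equiv])
    finally show ?thesis .
  qed
  have Rf_iff: "(F1, F2) \<in> Rf \<longleftrightarrow> (\<exists>d. d \<notin> U \<and> F1 = g d \<and> F2 = g (\<alpha> d))" for F1 F2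
  proof
    assume "(F1, F2) \<in> Rf"
    then obtain d where d: "F1 \<in> faces \<sigma> \<alpha>" "F2 \<in> faces \<sigma> \<alpha>" "d \<notin> U" "d \<in> F1" "\<alpha> d \<in> F2"
      unfolding Rf_def U_def by blast
    obtain a b where ab: "F1 = g a" "F2 = g b" using d(1,2) faces_g by auto
    have "F1 = g d" using d(4) ab(1) gmem by simp
    moreover have "F2 = g (\<alpha> d)" using d(5) ab(2) gmem by simp
    ultimately show "\<exists>d. d \<notin> U \<and> F1 = g d \<and> F2 = g (\<alpha> d)" using d(3) by blast
  next
    assume "\<exists>d. d \<notin> U \<and> F1 = g d \<and> F2 = g (\<alpha> d)"
    then obtain d where d: "d \<notin> U" "F1 = g d" "F2 = g (\<alpha> d)" by blast
    have "F1 \<in> faces \<sigma> \<alpha>" "F2 \<in> faces \<sigma> \<alpha>" using d faces_g by auto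
    then show "(F1, F2) \<in> Rf" unfolding Rf_def using d gself U_def by blast
  qed
  have Rf_sym: "sym Rf"
  proof (rule symI)
    fix a b assume "(a, b) \<in> Rf"
    then obtain d where d: "d \<notin> U" "a = g d" "b = g (\<alpha> d)" using Rf_iff by blast
    have "\<alpha> d \<notin> U" using Ua[of "\<alpha> d"] d(1) aa by auto
    then show "(b, a) \<in> Rf" unfolding Rf_iff using d aa by (auto intro!: exI[of _ "\<alpha> d"])
  qed
  have eqR1: "equiv UNIV R1" unfolding R1_def by (rule gen_rel_equiv)
  have Sf_R1: "(x, y) \<in> R1" if "(x, y) \<in> gen_rel Sf" for x y
    using gen_rel_mono[of Sf "Sf \<union> Sa U"] that unfolding R1_def by blast
  have R1_iff: "(x, y) \<in> R1 \<longleftrightarrow> (g x, g y) \<in> Rf\<^sup>*" for x y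
  proof
    assume "(x, y) \<in> R1"
    then have "(x, y) \<in> ((Sf \<union> Sa U) \<union> (Sf \<union> Sa U)\<inverse>)\<^sup>*" unfolding R1_def gen_rel_def by simp
    then show "(g x, g y) \<in> Rf\<^sup>*"
    proof (induction rule: rtrancl_induct)
      case (step y z)
      have one: "(g y, g z) \<in> Rf\<^sup>*"
      proof -
        have "(y, z) \<in> Sf \<or> (z, y) \<in> Sf \<or> (y, z) \<in> Sa U \<or> (z, y) \<in> Sa U" using step.hyps(2) by blast
        then show ?thesis
        proof (elim disjE)
          assume "(y, z) \<in> Sf"
          then have "(y, z) \<in> gen_rel Sf" by (rule gen_rel_base)
          then have "g y = g z" by (simp add: g_def equiv_class_iff[OF gen_rel_equiv])
          then show ?thesis by simp
        next
          assume "(z, y) \<in> Sf"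
          then have "(z, y) \<in> gen_rel Sf" by (rule gen_rel_base)
          then have "g z = g y" by (simp add: g_def equiv_class_iff[OF gen_rel_equiv])
          then show ?thesis by simp
        next
          assume "(y, z) \<in> Sa U" then have "z = \<alpha> y" "y \<notin> U" by (auto simp: Sa_def)
          then have "(g y, g z) \<in> Rf" using Rf_iff by blast
          then show ?thesis by (rule r_into_rtrancl)
        next
          assume "(z, y) \<in> Sa U" then have "y = \<alpha> z" "z \<notin> U" by (auto simp: Sa_def)
          then have "(g z, g y) \<in> Rf" using Rf_iff by blast
          then have "(g y, g z) \<in> Rf" using Rf_sym by (simp add: sym_def)
          then show ?thesis by (rule r_into_rtrancl)
        qed
      qed
      show ?case using step.IH one by (rule rtrancl_trans)
    qed simp
  next
    assume xy: "(g x, g y) \<in> Rf\<^sup>*"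
    have "\<forall>y. F = g y \<longrightarrow> (x, y) \<in> R1" if "(g x, F) \<in> Rf\<^sup>*" for F
      using that
    proof (induction rule: rtrancl_induct)
      case base
      show ?case
      proof (intro allI impI)
        fix y assume "g x = g y"
        then have "(x, y) \<in> gen_rel Sf" by (simp add: g_def equiv_class_iff[OF gen_rel_equiv])
        then show "(x, y) \<in> R1" by (rule Sf_R1)
      qed
    next
      case (step F1 F2)
      show ?case
      proof (intro allI impI)
        fix y assume y: "F2 = g y"
        obtain e where e: "e \<notin> U" "F1 = g e" "F2 = g (\<alpha> e)" using step.hyps(2) Rf_iff by blast
        have xe: "(x, e) \<in> R1" using step.IH e(2) by simp
        have ee: "(e, \<alpha> e) \<in> R1" unfolding R1_def by (rule gen_rel_base) (use e(1) in \<open>auto simp: Sa_def\<close>)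
        have ey: "(\<alpha> e, y) \<in> R1"
        proof -
          have "g (\<alpha> e) = g y" using e(3) y by simp
          then have "(\<alpha> e, y) \<in> gen_rel Sf" by (simp add: g_def equiv_class_iff[OF gen_rel_equiv])
          then show ?thesis by (rule Sf_R1)
        qed
        show "(x, y) \<in> R1" by (rule equivD(2)[OF eqR1 equivD(2)[OF eqR1 xe ee] ey])
      qed
    qed
    then show "(x, y) \<in> R1" using xy by blast
  qed
  have c1: "card (UNIV // R1) = card ((\<lambda>x. Rf\<^sup>* `` {g x}) ` UNIV)"
    by (rule card_quot_kernel[OF eqR1 equiv_rtrancl_sym[OF Rf_sym] R1_iff])
  have S: "{(Rf\<^sup>*) `` {f} | f. f \<in> faces \<sigma> \<alpha>} = (\<lambda>x. Rf\<^sup>* `` {g x}) ` UNIV"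
    unfolding faces_g by auto
  have "ncomp_compl V vert \<sigma> \<alpha> H = card ((\<lambda>x. Rf\<^sup>* `` {g x}) ` UNIV) + card iso"
    unfolding ncomp_compl_def Rf_def[symmetric] S iso_def ..
  then show ?thesis using c1 R1_def U_def by simp
qed

lemma k_formula_rgl:
  assumes HE: "H \<subseteq> edges \<alpha>"
  shows "int (k_ker vert \<sigma> \<alpha> H) = int (ncomp_compl V vert \<sigma> \<alpha> H) - int (ncomp V vert \<alpha> (edges \<alpha>))"
proof -
  have a: "k_ker vert \<sigma> \<alpha> H + card (UNIV // gen_rel (Sf \<union> Sa {})) = card (UNIV // gen_rel (Sf \<union> Sa (\<Union>H)))"
    by (rule k_eq[OF HE])
  have b: "card (UNIV // gen_rel (Sf \<union> Sa (\<Union>H))) + card iso = ncomp_compl V vert \<sigma> \<alpha> H" by (rule L6[OF HE])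
  have c: "card (UNIV // gen_rel (Sf \<union> Sa {})) + card iso = ncomp V vert \<alpha> (edges \<alpha>)" by (rule L7)
  show ?thesis using a b c by linarith
qed

end

lemma alg_term:
  fixes X Y Z :: real
  assumes "Y \<noteq> 0" and "ee = g + k + a - b" and "ez = 2 * a"
  shows "W * Y powi ee * Z powi ez = Y powi g * (W * Y powi k * (Y * Z\<^sup>2) powi a * inverse Y powi b)"
proof -
  have z: "Z powi ez = (Z\<^sup>2) powi a"
    using assms(3) power_int_mult[of Z 2 a] by simp
  have y: "Y powi ee = Y powi g * Y powi k * Y powi a * inverse Y powi b"
  proof -
    have "Y powi ee = Y powi (g + k + a) * Y powi (- b)"
      using assms(1,2) by (simp flip: power_int_add)
    also have "\<dots> = Y powi g * Y powi k * Y powi a * inverse Y powi b"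
      using assms(1) by (simp add: power_int_add power_int_minus power_int_inverse)
    finally show ?thesis .
  qed
  show ?thesis unfolding z y by (simp add: power_int_mult_distrib)
qed

lemma parity_s:
  fixes V :: "'v set" and vert :: "'d::finite \<Rightarrow> 'v" and \<sigma> \<alpha> :: "'d \<Rightarrow> 'd"
  assumes "ribbon_graph V vert \<sigma> \<alpha>" and "H \<subseteq> edges \<alpha>"
  shows "even (s_nbhd V vert \<sigma> \<alpha> H)"
  by (rule rgl.parity_H[OF rgl.intro[OF assms(1)] assms(2)])

lemma k_formula:
  fixes V :: "'v set" and vert :: "'d::finite \<Rightarrow> 'v" and \<sigma> \<alpha> :: "'d \<Rightarrow> 'd"
  assumes "ribbon_graph V vert \<sigma> \<alpha>" and "H \<subseteq> edges \<alpha>"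
  shows "int (k_ker vert \<sigma> \<alpha> H) = int (ncomp_compl V vert \<sigma> \<alpha> H) - int (ncomp V vert \<alpha> (edges \<alpha>))"
  by (rule rgl.k_formula_rgl[OF rgl.intro[OF assms(1)] assms(2)])

theorem lemma4p1:
  fixes V :: "'v set" and vert :: "'d::finite \<Rightarrow> 'v" and \<sigma> \<alpha> :: "'d \<Rightarrow> 'd"
    and X Y Z :: real
  assumes "ribbon_graph V vert \<sigma> \<alpha>" and "Y \<noteq> 0"
  shows "BR V vert \<sigma> \<alpha> X Y Z =
         Y powi genus_closed V vert \<sigma> \<alpha> * P_poly V vert \<sigma> \<alpha> (X - 1) Y (Y * Z\<^sup>2) (inverse Y)"
proof -
  define E where "E = edges \<alpha>"
  have finE: "finite E" by simp
  define sE where "sE = s_nbhd V vert \<sigma> \<alpha> E"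
  have evE: "even sE" unfolding sE_def E_def using parity_s[OF assms(1)] by simp
  have g: "genus_closed V vert \<sigma> \<alpha> = sE div 2"
    unfolding genus_closed_def sE_def s_nbhd_def E_def ..
  show ?thesis
    unfolding BR_def P_poly_def Let_def sum_distrib_left
  proof (rule sum.cong[OF refl])
    fix H assume "H \<in> Pow (edges \<alpha>)"
    then have HE: "H \<subseteq> E" by (simp add: E_def)
    have evH: "even (s_nbhd V vert \<sigma> \<alpha> H)" using parity_s[OF assms(1)] HE E_def by simp
    have kf: "int (k_ker vert \<sigma> \<alpha> H) = int (ncomp_compl V vert \<sigma> \<alpha> H) - int (ncomp V vert \<alpha> E)"
      using k_formula[OF assms(1)] HE E_def by simp
    have cd: "int (card (E - H)) = int (card E) - int (card H)"
      using HE finE by (simp add: card_Diff_subset of_nat_diff card_mono finite_subset)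
    define sp where "sp = s_perp V vert \<sigma> \<alpha> H"
    have evp: "even sp"
    proof -
      have "sp = sE + s_nbhd V vert \<sigma> \<alpha> H + 2 * int (ncomp_compl V vert \<sigma> \<alpha> H) - 2 * int (ncomp V vert \<alpha> E)
                 - 2 * int (ncomp V vert \<alpha> H) + 2 * int (card V) - 2 * int (card H)"
        unfolding sp_def s_perp_def sE_def s_nbhd_def E_def[symmetric] cd by simp
      then show ?thesis using evE evH by simp
    qed
    have xe: "int (card V) - int (ncomp V vert \<alpha> E) - (int (card V) - int (ncomp V vert \<alpha> H))
       = int (ncomp V vert \<alpha> H) - int (ncomp V vert \<alpha> E)" by simp
    show "(X - 1) powi (int (card V) - int (ncomp V vert \<alpha> (edges \<alpha>)) - (int (card V) - int (ncomp V vert \<alpha> H))) *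
          Y powi (int (card H) - (int (card V) - int (ncomp V vert \<alpha> H))) *
          Z powi (int (ncomp V vert \<alpha> H) - int (bc V vert \<sigma> \<alpha> H) + (int (card H) - (int (card V) - int (ncomp V vert \<alpha> H)))) =
          Y powi genus_closed V vert \<sigma> \<alpha> *
          ((X - 1) powi (int (ncomp V vert \<alpha> H) - int (ncomp V vert \<alpha> (edges \<alpha>))) * Y powi int (k_ker vert \<sigma> \<alpha> H) *
           (Y * Z\<^sup>2) powi (s_nbhd V vert \<sigma> \<alpha> H div 2) * inverse Y powi (s_perp V vert \<sigma> \<alpha> H div 2))"
      unfolding g E_def[symmetric] sp_def[symmetric]
      unfolding xe
    proof (rule alg_term[OF assms(2)])
      show "int (card H) - (int (card V) - int (ncomp V vert \<alpha> H)) =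
        sE div 2 + int (k_ker vert \<sigma> \<alpha> H) + s_nbhd V vert \<sigma> \<alpha> H div 2 - sp div 2"
      proof -
        obtain a1 where a1: "s_nbhd V vert \<sigma> \<alpha> H = 2 * a1" using evH by (auto elim!: evenE)
        obtain a2 where a2: "sp = 2 * a2" using evp by (auto elim!: evenE)
        obtain a3 where a3: "sE = 2 * a3" using evE by (auto elim!: evenE)
        have "sp = sE + s_nbhd V vert \<sigma> \<alpha> H + 2 * int (ncomp_compl V vert \<sigma> \<alpha> H) - 2 * int (ncomp V vert \<alpha> E)
                 - 2 * int (ncomp V vert \<alpha> H) + 2 * int (card V) - 2 * int (card H)"
          unfolding sp_def s_perp_def sE_def s_nbhd_def E_def[symmetric] cd by simp
        then show ?thesis using a1 a2 a3 kf by simp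
      qed
      show "int (ncomp V vert \<alpha> H) - int (bc V vert \<sigma> \<alpha> H) + (int (card H) - (int (card V) - int (ncomp V vert \<alpha> H))) =
        2 * (s_nbhd V vert \<sigma> \<alpha> H div 2)"
        using evH unfolding s_nbhd_def by (auto elim!: evenE)
    qed
  qed
qed

end
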